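(* Let $Q_{\mathcal A}=\{(\alpha,U_\alpha):\alpha\in\mathcal{A}(M)\text{ extendible}\}$, where $U_\alpha$ is the largest open set with $(\alpha,U_\alpha)\in\mathrm{EX}(M)$. Then the topological boundary $\partial\iota_{Q_{\mathcal A}}(M)$ of $\iota_{Q_{\mathcal A}}(M)$ in $Q_{\mathcal A}(M)$ is in bijective correspondence with the quotient $\mathcal{B}(M)/\!\equiv$, where $\mathcal{B}(M)=\{(\alpha,U,\{p\}):(\alpha,U)\in\mathrm{EX}(M),\ p\in B(\alpha)\cap U\}$ is the set of all boundary points.
   Context: Conventions: $M$ is an $n$-dimensional smooth manifold (Hausdorff, second countable) with maximal $C^\infty$ atlas $\mathcal{A}(M)$; every chart $\alpha$ has open domain $\mathrm{dom}(\alpha)\subset M$ and open range $\mathrm{ran}(\alpha)\subset\mathbb{R}^n$. For $A\subset\mathbb{R}^n$, $\partial A$ is its boundary in $\mathbb{R}^n$; for $A\subset U\subset\mathbb{R}^n$, $\partial_U A$ is the boundary of $A$ relative to $U$. An admissible boundary point of $\alpha$ is a $p\in\partial\,\mathrm{ran}(\alpha)$ such that every sequence $(x_i)\subset\mathrm{dom}(\alpha)$ with $\alpha(x_i)\to p$ has no accumulation point in $M$; $B(\alpha)$ is the set of these. An extension is a pair $(\alpha,U)$, $U\subset\mathbb{R}^n$ open, $\mathrm{ran}(\alpha)\subset U$, $\emptyset\ne\partial_U\mathrm{ran}(\alpha)\subset B(\alpha)$; $\mathrm{EX}(M)$ is the set of extensions; $\alpha$ is extendible if it has an extension, and then there is a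 unique largest such $U$. A boundary set is $(\alpha,U,V)$ with $(\alpha,U)\in\mathrm{EX}(M)$, $V\subset B(\alpha)\cap U$ (a boundary point if $V=\{p\}$). $(\alpha,U,V)$ covers $(\beta,X,Y)$ if for every sequence $(y_i)\subset\mathrm{dom}(\beta)$ with $(\beta(y_i))$ having an accumulation point in $Y$ there is a subsequence $(v_i)\subset\mathrm{dom}(\alpha)$ of $(y_i)$ with $(\alpha(v_i))$ having an accumulation point in $V$; they are equivalent, $\equiv$, if each covers the other. Completion: for $Q\subset\mathrm{EX}(M)$ let $P=\{(\alpha,\mathrm{ran}(\alpha)):\alpha\in\mathcal{A}(M)\}$, $S_Q=P\cup Q$, $N_{(\alpha,U)}=\mathrm{ran}(\alpha)\cup\partial_U\mathrm{ran}(\alpha)$ with subspace topology of $\mathbb{R}^n$, $N_Q=\bigsqcup_{(\alpha,U)\in S_Q}N_{(\alpha,U)}$ with disjoint-union topology. Identify $x\in N_{(\alpha,U)}$ with $y\in N_{(\beta,X)}$ iff either $x\in\mathrm{ran}(\alpha)$, $y\in\mathrm{ran}(\beta)$, $\beta\circ\alpha^{-1}(x)=y$, or $x\in\partial_U\mathrm{ran}(\alpha)$, $y\in\partial_X\mathrm{ran}(\beta)$, $(\alpha,U,\{x\})\equiv(\beta,X,\{y\})$. $Q(M)$ is the quotient space, $q:N_Q\to Q(M)$ the quotient map, and $\iota_Q:M\to Q(M)$, $\iota_Q(x)=q(\alpha(x))$ for any $\alpha\in\mathcal{A}(M)$ with $x\in\mathrm{dom}(\alpha)$. *)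

theory Defs
  imports "HOL-Analysis.Analysis"
begin

coinductive smooth_real_on :: "(real^'n) set \<Rightarrow> (real^'n \<Rightarrow> real) \<Rightarrow> bool" for U where
  "continuous_on U g \<Longrightarrow>
   (\<forall>i. \<exists>d. (\<forall>x\<in>U. ((\<lambda>t. g (x + t *\<^sub>R axis i 1)) has_real_derivative d x) (at 0))
             \<and> smooth_real_on U d)
   \<Longrightarrow> smooth_real_on U g"

definition smooth_on :: "(real^'n) set \<Rightarrow> (real^'n \<Rightarrow> real^'m) \<Rightarrow> bool" where
  "smooth_on U f \<longleftrightarrow> (\<forall>j. smooth_real_on U (\<lambda>x. f x $ j))"

type_synonym ('a,'n) chart = "'a set \<times> ('a \<Rightarrow> real^'n)"

definition cdom :: "('a,'n) chart \<Rightarrow> 'a set" where "cdom \<alpha> = fst \<alpha>"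
definition cmap :: "('a,'n) chart \<Rightarrow> 'a \<Rightarrow> real^'n" where "cmap \<alpha> = snd \<alpha>"
definition cran :: "('a,'n) chart \<Rightarrow> (real^'n) set" where "cran \<alpha> = cmap \<alpha> ` cdom \<alpha>"
definition cinv :: "('a,'n) chart \<Rightarrow> real^'n \<Rightarrow> 'a" where "cinv \<alpha> = inv_into (cdom \<alpha>) (cmap \<alpha>)"

definition is_chart :: "('a::topological_space,'n::finite) chart \<Rightarrow> bool" where
  "is_chart \<alpha> \<longleftrightarrow> open (cdom \<alpha>) \<and> open (cran \<alpha>) \<and>
     homeomorphism (cdom \<alpha>) (cran \<alpha>) (cmap \<alpha>) (cinv \<alpha>)"

definition smooth_compatible :: "('a,'n::finite) chart \<Rightarrow> ('a,'n) chart \<Rightarrow> bool" where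
  "smooth_compatible \<alpha> \<beta> \<longleftrightarrow>
     smooth_on (cmap \<alpha> ` (cdom \<alpha> \<inter> cdom \<beta>)) (cmap \<beta> \<circ> cinv \<alpha>) \<and>
     smooth_on (cmap \<beta> ` (cdom \<alpha> \<inter> cdom \<beta>)) (cmap \<alpha> \<circ> cinv \<beta>)"

definition maximal_smooth_atlas :: "('a::topological_space,'n::finite) chart set \<Rightarrow> bool" where
  "maximal_smooth_atlas A \<longleftrightarrow>
     (\<forall>\<alpha>\<in>A. is_chart \<alpha>) \<and> (\<Union>\<alpha>\<in>A. cdom \<alpha>) = UNIV \<and>
     (\<forall>\<alpha>\<in>A. \<forall>\<beta>\<in>A. smooth_compatible \<alpha> \<beta>) \<and>
     (\<forall>\<beta>. is_chart \<beta> \<and> (\<forall>\<alpha>\<in>A. smooth_compatible \<alpha> \<beta>) \<longrightarrow> \<beta> \<in> A)"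

definition seq_accum :: "(nat \<Rightarrow> 'b::topological_space) \<Rightarrow> 'b \<Rightarrow> bool" where
  "seq_accum x y \<longleftrightarrow> (\<forall>S. open S \<and> y \<in> S \<longrightarrow> (\<exists>\<^sub>F i in sequentially. x i \<in> S))"

definition has_accum :: "(nat \<Rightarrow> 'b::topological_space) \<Rightarrow> bool" where
  "has_accum x \<longleftrightarrow> (\<exists>y. seq_accum x y)"

definition rel_bd :: "(real^'n) set \<Rightarrow> (real^'n) set \<Rightarrow> (real^'n) set" where
  "rel_bd U A = (subtopology euclidean U) frontier_of A"

definition Bpts :: "('a::topological_space,'n::finite) chart \<Rightarrow> (real^'n) set" where
  "Bpts \<alpha> = {p. p \<in> frontier (cran \<alpha>) \<and>
      (\<forall>x. (\<forall>i. x i \<in> cdom \<alpha>) \<and> (cmap \<alpha> \<circ> x) \<longlonglongrightarrow> p \<longrightarrow> \<not> has_accum x)}"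

definition EXT :: "('a::topological_space,'n::finite) chart set
                   \<Rightarrow> (('a,'n) chart \<times> (real^'n) set) set" where
  "EXT A = {(\<alpha>, U). \<alpha> \<in> A \<and> open U \<and> cran \<alpha> \<subseteq> U \<and>
              rel_bd U (cran \<alpha>) \<noteq> {} \<and> rel_bd U (cran \<alpha>) \<subseteq> Bpts \<alpha>}"

definition extendible :: "('a::topological_space,'n::finite) chart set \<Rightarrow> ('a,'n) chart \<Rightarrow> bool" where
  "extendible A \<alpha> \<longleftrightarrow> (\<exists>U. (\<alpha>, U) \<in> EXT A)"

definition Umax :: "('a::topological_space,'n::finite) chart set \<Rightarrow> ('a,'n) chart \<Rightarrow> (real^'n) set" where
  "Umax A \<alpha> = (THE U. (\<alpha>, U) \<in> EXT A \<and> (\<forall>V. (\<alpha>, V) \<in> EXT A \<longrightarrow> V \<subseteq> U))"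

type_synonym ('a,'n) bset = "('a,'n) chart \<times> ((real^'n) set) \<times> ((real^'n) set)"

definition is_bset :: "('a::topological_space,'n::finite) chart set \<Rightarrow> ('a,'n) bset \<Rightarrow> bool" where
  "is_bset A b \<longleftrightarrow> (case b of (\<alpha>, U, V) \<Rightarrow> (\<alpha>, U) \<in> EXT A \<and> V \<subseteq> Bpts \<alpha> \<inter> U)"

definition covers :: "('a,'n::finite) bset \<Rightarrow> ('a,'n) bset \<Rightarrow> bool" where
  "covers b c \<longleftrightarrow> (case b of (\<alpha>, U, V) \<Rightarrow> case c of (\<beta>, X, Y) \<Rightarrow>
     (\<forall>y. (\<forall>i. y i \<in> cdom \<beta>) \<and> (\<exists>q\<in>Y. seq_accum (cmap \<beta> \<circ> y) q) \<longrightarrow>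
        (\<exists>r. strict_mono r \<and> (\<forall>i. y (r i) \<in> cdom \<alpha>) \<and>
             (\<exists>p\<in>V. seq_accum (cmap \<alpha> \<circ> (y \<circ> r)) p))))"

definition bequiv :: "('a,'n::finite) bset \<Rightarrow> ('a,'n) bset \<Rightarrow> bool" where
  "bequiv b c \<longleftrightarrow> covers b c \<and> covers c b"

definition BM :: "('a::topological_space,'n::finite) chart set \<Rightarrow> ('a,'n) bset set" where
  "BM A = {(\<alpha>, U, {p}) | \<alpha> U p. (\<alpha>, U) \<in> EXT A \<and> p \<in> Bpts \<alpha> \<inter> U}"

definition BM_rel :: "('a::topological_space,'n::finite) chart set \<Rightarrow> (('a,'n) bset \<times> ('a,'n) bset) set" where
  "BM_rel A = {(b, c). b \<in> BM A \<and> c \<in> BM A \<and> bequiv b c}"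

type_synonym ('a,'n) idx = "('a,'n) chart \<times> (real^'n) set"
type_synonym ('a,'n) npt = "('a,'n) idx \<times> (real^'n)"

definition SQ :: "('a::topological_space,'n::finite) chart set \<Rightarrow> ('a,'n) idx set \<Rightarrow> ('a,'n) idx set" where
  "SQ A Q = {(\<alpha>, cran \<alpha>) | \<alpha>. \<alpha> \<in> A} \<union> Q"

definition Nset :: "('a,'n::finite) idx \<Rightarrow> (real^'n) set" where
  "Nset s = (case s of (\<alpha>, U) \<Rightarrow> cran \<alpha> \<union> rel_bd U (cran \<alpha>))"

definition NQ_top :: "('a::topological_space,'n::finite) chart set \<Rightarrow> ('a,'n) idx set \<Rightarrow> ('a,'n) npt topology" where
  "NQ_top A Q = sum_topology (\<lambda>s. subtopology euclidean (Nset s)) (SQ A Q)"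

definition ident :: "('a::topological_space,'n::finite) chart set \<Rightarrow> ('a,'n) idx set \<Rightarrow> (('a,'n) npt \<times> ('a,'n) npt) set" where
  "ident A Q = {(((\<alpha>, U), x), ((\<beta>, X), y)) | \<alpha> U x \<beta> X y.
      (\<alpha>, U) \<in> SQ A Q \<and> (\<beta>, X) \<in> SQ A Q \<and> x \<in> Nset (\<alpha>, U) \<and> y \<in> Nset (\<beta>, X) \<and>
      ((x \<in> cran \<alpha> \<and> y \<in> cran \<beta> \<and> cinv \<alpha> x \<in> cdom \<beta> \<and> cmap \<beta> (cinv \<alpha> x) = y) \<or>
       (x \<in> rel_bd U (cran \<alpha>) \<and> y \<in> rel_bd X (cran \<beta>) \<and>
        bequiv (\<alpha>, U, {x}) (\<beta>, X, {y})))}"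

definition ident_eq :: "('a::topological_space,'n::finite) chart set \<Rightarrow> ('a,'n) idx set \<Rightarrow> (('a,'n) npt \<times> ('a,'n) npt) set" where
  "ident_eq A Q = Restr ((ident A Q \<union> (ident A Q)\<inverse>)\<^sup>*) (topspace (NQ_top A Q))"

definition qmap :: "('a::topological_space,'n::finite) chart set \<Rightarrow> ('a,'n) idx set \<Rightarrow> ('a,'n) npt \<Rightarrow> ('a,'n) npt set" where
  "qmap A Q z = ident_eq A Q `` {z}"

definition QM_top :: "('a::topological_space,'n::finite) chart set \<Rightarrow> ('a,'n) idx set \<Rightarrow> ('a,'n) npt set topology" where
  "QM_top A Q = topology (\<lambda>T. T \<subseteq> topspace (NQ_top A Q) // ident_eq A Q \<and>
                               openin (NQ_top A Q) (\<Union>T))"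

definition iotaQ :: "('a::topological_space,'n::finite) chart set \<Rightarrow> ('a,'n) idx set \<Rightarrow> 'a \<Rightarrow> ('a,'n) npt set" where
  "iotaQ A Q x = (let \<alpha> = (SOME \<alpha>. \<alpha> \<in> A \<and> x \<in> cdom \<alpha>) in qmap A Q ((\<alpha>, cran \<alpha>), cmap \<alpha> x))"

definition QA :: "('a::topological_space,'n::finite) chart set \<Rightarrow> ('a,'n) idx set" where
  "QA A = {(\<alpha>, Umax A \<alpha>) | \<alpha>. \<alpha> \<in> A \<and> extendible A \<alpha>}"

end

theory Submission
  imports Defs
begin

lemma rel_bd_open: "open U \<Longrightarrow> rel_bd U S = U \<inter> frontier S"
  unfolding rel_bd_def by (simp add: frontier_of_subtopology_open)

lemma rel_bd_disj: "open U \<Longrightarrow> open S \<Longrightarrow> x \<in> rel_bd U S \<Longrightarrow> x \<notin> S"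
  using frontier_disjoint_eq[of S] by (auto simp: rel_bd_open)

lemma Umax_prop:
  assumes ex: "extendible A \<alpha>"
  shows "(\<alpha>, Umax A \<alpha>) \<in> EXT A \<and> (\<forall>V. (\<alpha>, V) \<in> EXT A \<longrightarrow> V \<subseteq> Umax A \<alpha>)"
proof -
  define W where "W = \<Union>{V. (\<alpha>, V) \<in> EXT A}"
  obtain U0 where U0: "(\<alpha>, U0) \<in> EXT A" using ex unfolding extendible_def by blast
  have opW: "open W" unfolding W_def by (auto simp: EXT_def)
  have rW: "rel_bd W (cran \<alpha>) = W \<inter> frontier (cran \<alpha>)" using opW by (rule rel_bd_open)
  have WE: "(\<alpha>, W) \<in> EXT A"
  proof -
    have "\<alpha> \<in> A" "cran \<alpha> \<subseteq> U0" "rel_bd U0 (cran \<alpha>) \<noteq> {}" "open U0"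
      using U0 by (auto simp: EXT_def)
    moreover have "U0 \<subseteq> W" using U0 unfolding W_def by blast
    moreover have "rel_bd W (cran \<alpha>) \<subseteq> Bpts \<alpha>"
    proof
      fix x assume "x \<in> rel_bd W (cran \<alpha>)"
      then obtain V where V: "(\<alpha>, V) \<in> EXT A" "x \<in> V" "x \<in> frontier (cran \<alpha>)"
        using rW unfolding W_def by blast
      then have "x \<in> rel_bd V (cran \<alpha>)" by (auto simp: EXT_def rel_bd_open)
      then show "x \<in> Bpts \<alpha>" using V by (auto simp: EXT_def)
    qed
    ultimately show ?thesis using opW rW by (auto simp: EXT_def rel_bd_open)
  qed
  have sub: "\<forall>V. (\<alpha>, V) \<in> EXT A \<longrightarrow> V \<subseteq> W" unfolding W_def by blast
  have "Umax A \<alpha> = W" unfolding Umax_def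
    by (rule the_equality) (use WE sub in \<open>auto\<close>)
  then show ?thesis using WE sub by simp
qed

lemma covers_refl: "covers (\<alpha>, U, V) (\<alpha>, X, V)"
  unfolding covers_def
  by (auto intro!: exI[of _ id] simp: strict_mono_def)

lemma covers_trans:
  assumes "covers b c" "covers c d" shows "covers b d"
proof -
  obtain \<alpha> U V where b: "b = (\<alpha>, U, V)" by (cases b) auto
  obtain \<beta> X Y where c: "c = (\<beta>, X, Y)" by (cases c) auto
  obtain \<gamma> Z W where d: "d = (\<gamma>, Z, W)" by (cases d) auto
  show ?thesis unfolding b d covers_def
  proof (clarsimp)
    fix y q assume y: "\<forall>i. y i \<in> cdom \<gamma>" "q \<in> W" "seq_accum (cmap \<gamma> \<circ> y) q"
    have h2: "\<forall>y. (\<forall>i. y i \<in> cdom \<gamma>) \<and> (\<exists>x\<in>W. seq_accum (cmap \<gamma> \<circ> y) x) \<longrightarrow>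
          (\<exists>r. strict_mono r \<and> (\<forall>i. y (r i) \<in> cdom \<beta>) \<and> (\<exists>x\<in>Y. seq_accum (cmap \<beta> \<circ> (y \<circ> r)) x))"
      using assms(2) unfolding c d covers_def by simp
    have h1: "\<forall>y. (\<forall>i. y i \<in> cdom \<beta>) \<and> (\<exists>x\<in>Y. seq_accum (cmap \<beta> \<circ> y) x) \<longrightarrow>
          (\<exists>r. strict_mono r \<and> (\<forall>i. y (r i) \<in> cdom \<alpha>) \<and> (\<exists>x\<in>V. seq_accum (cmap \<alpha> \<circ> (y \<circ> r)) x))"
      using assms(1) unfolding b c covers_def by simp
    obtain r1 where r1: "strict_mono r1" "\<forall>i. y (r1 i) \<in> cdom \<beta>" "\<exists>p\<in>Y. seq_accum (cmap \<beta> \<circ> (y \<circ> r1)) p"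
      using h2[rule_format, of y] y by blast
    obtain r2 where r2: "strict_mono r2" "\<forall>i. (y \<circ> r1) (r2 i) \<in> cdom \<alpha>" "\<exists>p\<in>V. seq_accum (cmap \<alpha> \<circ> ((y \<circ> r1) \<circ> r2)) p"
      using h1[rule_format, of "y \<circ> r1"] r1 by auto
    show "\<exists>r. strict_mono r \<and> (\<forall>i. y (r i) \<in> cdom \<alpha>) \<and> (\<exists>p\<in>V. seq_accum (cmap \<alpha> \<circ> (y \<circ> r)) p)"
      apply (rule exI[of _ "r1 \<circ> r2"])
      using r1 r2 by (auto simp: strict_mono_def comp_assoc)
  qed
qed

lemma bequiv_refl: "bequiv (\<alpha>, U, V) (\<alpha>, X, V)"
  unfolding bequiv_def using covers_refl by blast

lemma bequiv_refl': "bequiv b b"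
  by (cases b) (auto intro: bequiv_refl)

lemma bequiv_sym: "bequiv b c \<Longrightarrow> bequiv c b"
  unfolding bequiv_def by blast

lemma bequiv_trans: "bequiv b c \<Longrightarrow> bequiv c d \<Longrightarrow> bequiv b d"
  unfolding bequiv_def using covers_trans by blast


definition inp :: "('a::topological_space,'n::finite) chart set \<Rightarrow> ('a,'n) idx set \<Rightarrow> ('a,'n) npt \<Rightarrow> bool" where
  "inp A Q z \<longleftrightarrow> fst z \<in> SQ A Q \<and> snd z \<in> cran (fst (fst z))"

definition bdp :: "('a::topological_space,'n::finite) chart set \<Rightarrow> ('a,'n) idx set \<Rightarrow> ('a,'n) npt \<Rightarrow> bool" where
  "bdp A Q z \<longleftrightarrow> fst z \<in> SQ A Q \<and> snd z \<in> rel_bd (snd (fst z)) (cran (fst (fst z)))"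

definition bs :: "('a,'n) npt \<Rightarrow> ('a,'n) bset" where
  "bs z = (fst (fst z), snd (fst z), {snd z})"

lemma SQ_facts:
  assumes "maximal_smooth_atlas A" "(\<alpha>, U) \<in> SQ A (QA A)"
  shows "\<alpha> \<in> A \<and> open U \<and> cran \<alpha> \<subseteq> U \<and> open (cran \<alpha>)"
proof -
  have "\<alpha> \<in> A" using assms(2) by (auto simp: SQ_def QA_def)
  then have oc: "open (cran \<alpha>)" using assms(1) by (auto simp: maximal_smooth_atlas_def is_chart_def)
  show ?thesis
  proof (cases "U = cran \<alpha>")
    case True then show ?thesis using oc \<open>\<alpha> \<in> A\<close> by auto
  next
    case False
    then have "(\<alpha>, U) \<in> QA A" using assms(2) by (auto simp: SQ_def)
    then have "U = Umax A \<alpha>" "extendible A \<alpha>" by (auto simp: QA_def)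
    then have "(\<alpha>, U) \<in> EXT A" using Umax_prop by blast
    then show ?thesis using oc by (auto simp: EXT_def)
  qed
qed

lemma SQ_bd:
  assumes "maximal_smooth_atlas A" "(\<alpha>, U) \<in> SQ A (QA A)" "x \<in> rel_bd U (cran \<alpha>)"
  shows "(\<alpha>, U) \<in> EXT A \<and> x \<in> Bpts \<alpha> \<inter> U"
proof -
  have f: "\<alpha> \<in> A \<and> open U \<and> cran \<alpha> \<subseteq> U \<and> open (cran \<alpha>)" using SQ_facts assms(1,2) .
  have "U \<noteq> cran \<alpha>"
  proof
    assume "U = cran \<alpha>"
    then show False using assms(3) f rel_bd_disj by (metis rel_bd_open IntD1)
  qed
  then have "(\<alpha>, U) \<in> QA A" using assms(2) by (auto simp: SQ_def)
  then have "U = Umax A \<alpha>" "extendible A \<alpha>" by (auto simp: QA_def)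
  then have E: "(\<alpha>, U) \<in> EXT A" using Umax_prop by blast
  moreover have "x \<in> U" using assms(3) f by (simp add: rel_bd_open)
  ultimately show ?thesis using assms(3) by (auto simp: EXT_def)
qed

lemma not_inp_bdp:
  assumes "maximal_smooth_atlas A" "inp A (QA A) z" "bdp A (QA A) z"
  shows False
proof -
  obtain \<alpha> U x where z: "z = ((\<alpha>, U), x)" by (metis prod.collapse)
  have "(\<alpha>, U) \<in> SQ A (QA A)" using assms(2) z by (simp add: inp_def)
  then have "open U" "open (cran \<alpha>)" using SQ_facts assms(1) by blast+
  then show False using assms(2,3) z rel_bd_disj by (auto simp: inp_def bdp_def)
qed

lemma ident_cases:
  assumes "(z, w) \<in> ident A Q"
  shows "(inp A Q z \<and> inp A Q w) \<or> (bdp A Q z \<and> bdp A Q w \<and> bequiv (bs z) (bs w))"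
  using assms unfolding ident_def inp_def bdp_def bs_def by auto

lemma chain_inp:
  assumes "maximal_smooth_atlas A" "(z, w) \<in> (ident A (QA A) \<union> (ident A (QA A))\<inverse>)\<^sup>*" "inp A (QA A) z"
  shows "inp A (QA A) w"
  using assms(2,3)
proof (induction rule: rtrancl_induct)
  case base then show ?case .
next
  case (step y w)
  then show ?case using ident_cases[of y w A "QA A"] ident_cases[of w y A "QA A"]
      not_inp_bdp[OF assms(1), of y] by auto
qed

lemma chain_bdp:
  assumes "maximal_smooth_atlas A" "(z, w) \<in> (ident A (QA A) \<union> (ident A (QA A))\<inverse>)\<^sup>*" "bdp A (QA A) z"
  shows "bdp A (QA A) w \<and> bequiv (bs z) (bs w)"
  using assms(2,3)
proof (induction rule: rtrancl_induct)
  case base then show ?case by (simp add: bequiv_refl')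
next
  case (step y w)
  then show ?case using ident_cases[of y w A "QA A"] ident_cases[of w y A "QA A"]
      not_inp_bdp[OF assms(1), of y] bequiv_trans bequiv_sym by blast
qed

lemma topspace_NQ: "topspace (NQ_top A Q) = Sigma (SQ A Q) Nset"
  by (simp add: NQ_top_def o_def)

lemma equiv_E: "equiv (topspace (NQ_top A Q)) (ident_eq A Q)"
proof -
  let ?R = "ident A Q \<union> (ident A Q)\<inverse>"
  have s: "sym (?R\<^sup>*)" by (rule sym_rtrancl) (auto simp: sym_def)
  show ?thesis unfolding ident_eq_def equiv_def
    using s by (auto simp: refl_on_def sym_def trans_def intro: rtrancl_trans)
qed

lemma equiv_BM: "equiv (BM A) (BM_rel A)"
  unfolding equiv_def refl_on_def sym_def trans_def BM_rel_def
  using bequiv_refl' bequiv_sym bequiv_trans by blast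

lemma openin_QM:
  "openin (QM_top A Q) W \<longleftrightarrow> W \<subseteq> topspace (NQ_top A Q) // ident_eq A Q \<and> openin (NQ_top A Q) (\<Union>W)"
proof -
  let ?T = "topspace (NQ_top A Q)" and ?E = "ident_eq A Q"
  have eq: "equiv ?T ?E" by (rule equiv_E)
  have "istopology (\<lambda>W. W \<subseteq> ?T // ?E \<and> openin (NQ_top A Q) (\<Union>W))"
    unfolding istopology_def
  proof (rule conjI; intro allI impI)
    fix S T assume S: "S \<subseteq> ?T // ?E \<and> openin (NQ_top A Q) (\<Union>S)"
      and T: "T \<subseteq> ?T // ?E \<and> openin (NQ_top A Q) (\<Union>T)"
    have "\<Union>(S \<inter> T) = \<Union>S \<inter> \<Union>T"
    proof
      show "\<Union>S \<inter> \<Union>T \<subseteq> \<Union>(S \<inter> T)"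
      proof
        fix x assume "x \<in> \<Union>S \<inter> \<Union>T"
        then obtain C D where "C \<in> S" "D \<in> T" "x \<in> C" "x \<in> D" by blast
        moreover have "C = D \<or> C \<inter> D = {}" using quotient_disj[OF eq] S T \<open>C \<in> S\<close> \<open>D \<in> T\<close> by blast
        ultimately show "x \<in> \<Union>(S \<inter> T)" by blast
      qed
    qed blast
    moreover have "openin (NQ_top A Q) (\<Union>S \<inter> \<Union>T)" using S T by (intro openin_Int) simp_all
    moreover have "S \<inter> T \<subseteq> ?T // ?E" using S by blast
    ultimately show "S \<inter> T \<subseteq> ?T // ?E \<and> openin (NQ_top A Q) (\<Union>(S \<inter> T))"
      by simp
  next
    fix K assume K: "\<forall>W\<in>K. W \<subseteq> ?T // ?E \<and> openin (NQ_top A Q) (\<Union>W)"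
    have "\<Union>(\<Union>K) = \<Union>(Union ` K)" by blast
    moreover have "openin (NQ_top A Q) (\<Union>(Union ` K))"
      by (rule openin_Union) (use K in blast)
    moreover have "\<Union>K \<subseteq> ?T // ?E" using K by blast
    ultimately show "\<Union>K \<subseteq> ?T // ?E \<and> openin (NQ_top A Q) (\<Union>(\<Union>K))"
      by simp
  qed
  then have "openin (QM_top A Q) = (\<lambda>W. W \<subseteq> ?T // ?E \<and> openin (NQ_top A Q) (\<Union>W))"
    unfolding QM_top_def by (rule topology_inverse')
  then show ?thesis by (rule fun_cong[THEN trans]) simp
qed

lemma topspace_QM: "topspace (QM_top A Q) = topspace (NQ_top A Q) // ident_eq A Q"
proof -
  have eq: "equiv (topspace (NQ_top A Q)) (ident_eq A Q)" by (rule equiv_E)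
  have "openin (QM_top A Q) (topspace (NQ_top A Q) // ident_eq A Q)"
    by (simp add: openin_QM Union_quotient[OF eq])
  then have "topspace (NQ_top A Q) // ident_eq A Q \<subseteq> topspace (QM_top A Q)"
    by (rule openin_subset)
  moreover have "topspace (QM_top A Q) \<subseteq> topspace (NQ_top A Q) // ident_eq A Q"
  proof
    fix C assume "C \<in> topspace (QM_top A Q)"
    then obtain W where "openin (QM_top A Q) W" "C \<in> W" unfolding topspace_def by blast
    then show "C \<in> topspace (NQ_top A Q) // ident_eq A Q" unfolding openin_QM by blast
  qed
  ultimately show ?thesis by blast
qed

lemma ident_E:
  "(z, w) \<in> ident A Q \<Longrightarrow> z \<in> topspace (NQ_top A Q) \<Longrightarrow> w \<in> topspace (NQ_top A Q) \<Longrightarrow>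
   (z, w) \<in> ident_eq A Q"
  unfolding ident_eq_def by auto

lemma E_chain: "(z, w) \<in> ident_eq A Q \<Longrightarrow> (z, w) \<in> (ident A Q \<union> (ident A Q)\<inverse>)\<^sup>*"
  unfolding ident_eq_def by auto

lemma class_inp:
  assumes "maximal_smooth_atlas A" "w \<in> ident_eq A (QA A) `` {z}" "inp A (QA A) z"
  shows "inp A (QA A) w"
  using chain_inp[OF assms(1) E_chain assms(3)] assms(2) by blast

lemma T_cases:
  assumes "z \<in> topspace (NQ_top A Q)"
  shows "inp A Q z \<or> bdp A Q z"
  using assms by (auto simp: topspace_NQ Nset_def inp_def bdp_def split: prod.splits)

lemma bs_BM:
  assumes "maximal_smooth_atlas A" "bdp A (QA A) z"
  shows "bs z \<in> BM A"
proof -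
  obtain \<alpha> U p where z: "z = ((\<alpha>, U), p)" by (metis prod.collapse)
  have "(\<alpha>, U) \<in> EXT A \<and> p \<in> Bpts \<alpha> \<inter> U"
    using SQ_bd[OF assms(1), of \<alpha> U p] assms(2) z by (simp add: bdp_def)
  then show ?thesis unfolding z bs_def BM_def by (simp only: fst_conv snd_conv) blast
qed

lemma ident_I_in:
  "(\<alpha>, U) \<in> SQ A Q \<Longrightarrow> (\<beta>, X) \<in> SQ A Q \<Longrightarrow> x \<in> cran \<alpha> \<Longrightarrow> y \<in> cran \<beta> \<Longrightarrow>
   cinv \<alpha> x \<in> cdom \<beta> \<Longrightarrow> cmap \<beta> (cinv \<alpha> x) = y \<Longrightarrow> (((\<alpha>, U), x), ((\<beta>, X), y)) \<in> ident A Q"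
  unfolding ident_def Nset_def by blast

lemma ident_I_bd:
  "(\<alpha>, U) \<in> SQ A Q \<Longrightarrow> (\<beta>, X) \<in> SQ A Q \<Longrightarrow> x \<in> rel_bd U (cran \<alpha>) \<Longrightarrow> y \<in> rel_bd X (cran \<beta>) \<Longrightarrow>
   bequiv (\<alpha>, U, {x}) (\<beta>, X, {y}) \<Longrightarrow> (((\<alpha>, U), x), ((\<beta>, X), y)) \<in> ident A Q"
  unfolding ident_def Nset_def by blast

lemma SQ_P: "\<beta> \<in> A \<Longrightarrow> (\<beta>, cran \<beta>) \<in> SQ A Q"
  unfolding SQ_def by blast

lemma cmap_cran: "x \<in> cdom \<beta> \<Longrightarrow> cmap \<beta> x \<in> cran \<beta>"
  unfolding cran_def by blast

lemma iota_image:
  assumes atl: "maximal_smooth_atlas A"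
  shows "iotaQ A (QA A) ` UNIV =
    (\<lambda>z. ident_eq A (QA A) `` {z}) ` {z \<in> topspace (NQ_top A (QA A)). inp A (QA A) z}"
proof -
  let ?Q = "QA A" and ?E = "ident_eq A (QA A)" and ?T = "topspace (NQ_top A (QA A))"
  have eq: "equiv ?T ?E" by (rule equiv_E)
  define ch where "ch x = (SOME \<beta>. \<beta> \<in> A \<and> x \<in> cdom \<beta>)" for x
  have ch: "ch x \<in> A \<and> x \<in> cdom (ch x)" for x
  proof -
    have "\<exists>\<beta>. \<beta> \<in> A \<and> x \<in> cdom \<beta>" using atl unfolding maximal_smooth_atlas_def by blast
    then show ?thesis unfolding ch_def by (rule someI_ex)
  qed
  define z0 where "z0 x = ((ch x, cran (ch x)), cmap (ch x) x)" for x
  have z0T: "z0 x \<in> ?T" for x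
    using ch[of x] SQ_P[of "ch x" A] cmap_cran[of x "ch x"] by (auto simp: z0_def topspace_NQ Nset_def)
  have z0i: "inp A ?Q (z0 x)" for x
    using ch[of x] SQ_P[of "ch x" A] cmap_cran[of x "ch x"] by (auto simp: z0_def inp_def)
  have io: "iotaQ A ?Q x = ?E `` {z0 x}" for x
    by (simp add: iotaQ_def Let_def qmap_def z0_def ch_def)
  show ?thesis
  proof
    show "range (iotaQ A ?Q) \<subseteq> (\<lambda>z. ?E `` {z}) ` {z \<in> ?T. inp A ?Q z}"
      using io z0T z0i by blast
  next
    show "(\<lambda>z. ?E `` {z}) ` {z \<in> ?T. inp A ?Q z} \<subseteq> range (iotaQ A ?Q)"
    proof
      fix C assume "C \<in> (\<lambda>z. ?E `` {z}) ` {z \<in> ?T. inp A ?Q z}"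
      then obtain z where C: "C = ?E `` {z}" "z \<in> ?T" "inp A ?Q z" by blast
      obtain \<alpha> U y where z: "z = ((\<alpha>, U), y)" by (metis prod.collapse)
      have y: "y \<in> cran \<alpha>" "(\<alpha>, U) \<in> SQ A ?Q" using C(3) z by (auto simp: inp_def)
      define x where "x = cinv \<alpha> y"
      have "cinv \<alpha> y \<in> cdom \<alpha>" using y(1) unfolding cinv_def cran_def by (rule inv_into_into)
      have "(z, z0 x) \<in> ident A ?Q" unfolding z z0_def
        by (rule ident_I_in) (use y ch[of x] SQ_P[of "ch x" A] cmap_cran[of x "ch x"] in \<open>auto simp: x_def\<close>)
      then have "(z, z0 x) \<in> ?E" using ident_E C(2) z0T by blast
      then have "C = iotaQ A ?Q x" using C(1) io eq_equiv_class_iff[OF eq C(2) z0T] by simp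
      then show "C \<in> range (iotaQ A ?Q)" by blast
    qed
  qed
qed

lemma frontier_iota:
  assumes atl: "maximal_smooth_atlas A"
  shows "(QM_top A (QA A)) frontier_of (iotaQ A (QA A) ` UNIV) =
    (\<lambda>z. ident_eq A (QA A) `` {z}) ` {z \<in> topspace (NQ_top A (QA A)). bdp A (QA A) z}"
proof -
  let ?Q = "QA A" and ?E = "ident_eq A (QA A)" and ?T = "topspace (NQ_top A (QA A))"
    and ?X = "QM_top A (QA A)" and ?N = "NQ_top A (QA A)"
  define S where "S = iotaQ A ?Q ` UNIV"
  have eq: "equiv ?T ?E" by (rule equiv_E)
  have Seq: "S = (\<lambda>z. ?E `` {z}) ` {z \<in> ?T. inp A ?Q z}"
    unfolding S_def by (rule iota_image[OF atl])
  have US: "\<Union>S = {z \<in> ?T. inp A ?Q z}"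
  proof
    show "\<Union>S \<subseteq> {z \<in> ?T. inp A ?Q z}"
    proof
      fix w assume "w \<in> \<Union>S"
      then obtain z where z: "z \<in> ?T" "inp A ?Q z" "w \<in> ?E `` {z}" unfolding Seq by blast
      have "w \<in> ?T" using z(3) equiv_type[OF eq] by blast
      then show "w \<in> {z \<in> ?T. inp A ?Q z}" using class_inp[OF atl z(3) z(2)] by blast
    qed
    show "{z \<in> ?T. inp A ?Q z} \<subseteq> \<Union>S"
      unfolding Seq using equiv_class_self[OF eq] by blast
  qed
  have SsubT: "S \<subseteq> ?T // ?E" unfolding Seq by (auto intro: quotientI)
  have opI: "openin ?N {z \<in> ?T. inp A ?Q z}"
    unfolding openin_sum_topology NQ_top_def
  proof (intro conjI ballI)
    show "{z \<in> topspace (sum_topology (\<lambda>s. subtopology euclidean (Nset s)) (SQ A ?Q)). inp A ?Q z}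
      \<subseteq> Sigma (SQ A ?Q) (topspace \<circ> (\<lambda>s. subtopology euclidean (Nset s)))" by auto
  next
    fix s assume s: "s \<in> SQ A ?Q"
    obtain \<alpha> U where s': "s = (\<alpha>, U)" by (metis prod.collapse)
    have oc: "open (cran \<alpha>)" using SQ_facts[OF atl] s s' by blast
    have "{x. (s, x) \<in> {z \<in> topspace (sum_topology (\<lambda>s. subtopology euclidean (Nset s)) (SQ A ?Q)). inp A ?Q z}}
          = cran \<alpha> \<inter> Nset s"
      using s by (auto simp: s' inp_def Nset_def)
    then show "openin (subtopology euclidean (Nset s))
       {x. (s, x) \<in> {z \<in> topspace (sum_topology (\<lambda>s. subtopology euclidean (Nset s)) (SQ A ?Q)). inp A ?Q z}}"
      using oc by (auto simp: openin_subtopology)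
  qed
  have opS: "openin ?X S" unfolding openin_QM using SsubT opI US by simp
  have int: "?X interior_of S = S" by (rule interior_of_openin[OF opS])
  show ?thesis
    unfolding S_def[symmetric] frontier_of_def int
  proof
    show "?X closure_of S - S \<subseteq> (\<lambda>z. ?E `` {z}) ` {z \<in> ?T. bdp A ?Q z}"
    proof
      fix C assume C: "C \<in> ?X closure_of S - S"
      then have "C \<in> ?T // ?E" using closure_of_subset_topspace[of ?X S] topspace_QM[of A ?Q] by blast
      then obtain z where z: "C = ?E `` {z}" "z \<in> ?T" by (rule quotientE)
      have "\<not> inp A ?Q z" using C z unfolding Seq by blast
      then have "bdp A ?Q z" using T_cases z(2) by blast
      then show "C \<in> (\<lambda>z. ?E `` {z}) ` {z \<in> ?T. bdp A ?Q z}" using z by blast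
    qed
  next
    show "(\<lambda>z. ?E `` {z}) ` {z \<in> ?T. bdp A ?Q z} \<subseteq> ?X closure_of S - S"
    proof
      fix C assume "C \<in> (\<lambda>z. ?E `` {z}) ` {z \<in> ?T. bdp A ?Q z}"
      then obtain z where z: "C = ?E `` {z}" "z \<in> ?T" "bdp A ?Q z" by blast
      have zC: "z \<in> C" using z equiv_class_self[OF eq] by blast
      have "C \<notin> S"
      proof
        assume "C \<in> S"
        then have "z \<in> \<Union>S" using zC by blast
        then have "inp A ?Q z" using US by blast
        then show False using not_inp_bdp[OF atl _ z(3)] by blast
      qed
      moreover have "C \<in> ?X closure_of S"
        unfolding in_closure_of
      proof (intro conjI allI impI)
        show "C \<in> topspace ?X" using z by (simp add: topspace_QM quotientI)
      next
        fix W assume W: "C \<in> W \<and> openin ?X W"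
        then have Wsub: "W \<subseteq> ?T // ?E" and Wop: "openin ?N (\<Union>W)" unfolding openin_QM by blast+
        obtain \<alpha> U p where zs: "z = ((\<alpha>, U), p)" by (metis prod.collapse)
        let ?s = "(\<alpha>, U)"
        have s: "?s \<in> SQ A ?Q" and p: "p \<in> rel_bd U (cran \<alpha>)" using z(3) zs by (auto simp: bdp_def)
        have f: "\<alpha> \<in> A \<and> open U \<and> cran \<alpha> \<subseteq> U \<and> open (cran \<alpha>)" using SQ_facts[OF atl s] .
        have "\<forall>i\<in>SQ A ?Q. openin (subtopology euclidean (Nset i)) {x. (i, x) \<in> \<Union>W}"
          using Wop unfolding NQ_top_def openin_sum_topology by (rule conjunct2)
        then have "openin (subtopology euclidean (Nset ?s)) {x. (?s, x) \<in> \<Union>W}"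
          using s by (rule bspec)
        then obtain G where G: "open G" "{x. (?s, x) \<in> \<Union>W} = G \<inter> Nset ?s"
          unfolding openin_subtopology by auto
        have "z \<in> \<Union>W" using zC W by blast
        then have "p \<in> {x. (?s, x) \<in> \<Union>W}" using zs by simp
        then have "p \<in> G" using G(2) by (simp only: Int_iff)
        moreover have "p \<in> closure (cran \<alpha>)" using p f by (auto simp: rel_bd_open frontier_def)
        ultimately have "G \<inter> cran \<alpha> \<noteq> {}" using open_Int_closure_eq_empty[OF G(1)] by blast
        then obtain y where y: "y \<in> G" "y \<in> cran \<alpha>" by blast
        have yN: "y \<in> Nset ?s" using y by (simp add: Nset_def)
        then have "(?s, y) \<in> \<Union>W" using G(2) y by blast
        then obtain D where D: "D \<in> W" "(?s, y) \<in> D" by blast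
        have yT: "(?s, y) \<in> ?T" using s yN by (simp add: topspace_NQ)
        have "D \<in> ?T // ?E" using D Wsub by blast
        then obtain w where w: "D = ?E `` {w}" "w \<in> ?T" by (rule quotientE)
        have "(w, (?s, y)) \<in> ?E" using D(2) unfolding w(1) by simp
        then have "D = ?E `` {(?s, y)}" using w eq_equiv_class_iff[OF eq w(2) yT] by simp
        moreover have "inp A ?Q (?s, y)" using s y by (simp add: inp_def)
        ultimately have "D \<in> S" unfolding Seq using yT by (intro image_eqI[where x="(?s, y)"]) simp_all
        then show "\<exists>y. y \<in> S \<and> y \<in> W" using D by blast
      qed
      ultimately show "C \<in> ?X closure_of S - S" by blast
    qed
  qed
qed

theorem mainTheorem7:
  fixes A :: "('a::{t2_space, second_countable_topology}, 'n::finite) chart set"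
  assumes "maximal_smooth_atlas A"
  shows "\<exists>f. bij_betw f ((QM_top A (QA A)) frontier_of (iotaQ A (QA A) ` UNIV))
                        (BM A // BM_rel A)"
proof -
  note atl = assms
  let ?Q = "QA A" and ?E = "ident_eq A (QA A)" and ?T = "topspace (NQ_top A (QA A))"
  have eq: "equiv ?T ?E" by (rule equiv_E)
  have eqB: "equiv (BM A) (BM_rel A)" by (rule equiv_BM)
  define F where "F = (\<lambda>z. ?E `` {z}) ` {z \<in> ?T. bdp A ?Q z}"
  define g where "g z = BM_rel A `` {bs z}" for z
  define f where "f C = g (SOME z. z \<in> C \<and> z \<in> ?T \<and> bdp A ?Q z)" for C
  have key: "f (?E `` {z}) = g z" if z: "z \<in> ?T" "bdp A ?Q z" for z
  proof -
    let ?z' = "SOME w. w \<in> ?E `` {z} \<and> w \<in> ?T \<and> bdp A ?Q w"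
    have "\<exists>w. w \<in> ?E `` {z} \<and> w \<in> ?T \<and> bdp A ?Q w"
      using z equiv_class_self[OF eq z(1)] by blast
    then have z'0: "?z' \<in> ?E `` {z} \<and> ?z' \<in> ?T \<and> bdp A ?Q ?z'" by (rule someI_ex)
    then have z': "?z' \<in> ?E `` {z}" "?z' \<in> ?T" "bdp A ?Q ?z'" by blast+
    have "(z, ?z') \<in> ?E" using z'(1) by simp
    then have "bequiv (bs z) (bs ?z')" using chain_bdp[OF atl E_chain z(2)] by blast
    then have "(bs z, bs ?z') \<in> BM_rel A"
      using bs_BM[OF atl z(2)] bs_BM[OF atl z'(3)] by (simp add: BM_rel_def)
    then have "g z = g ?z'" unfolding g_def
      using eq_equiv_class_iff[OF eqB bs_BM[OF atl z(2)] bs_BM[OF atl z'(3)]] by simp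
    then show ?thesis unfolding f_def by simp
  qed
  have inj: "inj_on f F"
  proof (rule inj_onI)
    fix C1 C2 assume C1: "C1 \<in> F" and C2: "C2 \<in> F" and fe: "f C1 = f C2"
    obtain z1 where z1: "C1 = ?E `` {z1}" "z1 \<in> ?T" "bdp A ?Q z1" using C1 unfolding F_def by blast
    obtain z2 where z2: "C2 = ?E `` {z2}" "z2 \<in> ?T" "bdp A ?Q z2" using C2 unfolding F_def by blast
    have "g z1 = g z2" using fe key[OF z1(2,3)] key[OF z2(2,3)] z1(1) z2(1) by simp
    then have "(bs z1, bs z2) \<in> BM_rel A" unfolding g_def
      using eq_equiv_class_iff[OF eqB bs_BM[OF atl z1(3)] bs_BM[OF atl z2(3)]] by simp
    then have be: "bequiv (bs z1) (bs z2)" by (simp add: BM_rel_def)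
    obtain \<alpha> U x where zs1: "z1 = ((\<alpha>, U), x)" by (metis prod.collapse)
    obtain \<beta> X y where zs2: "z2 = ((\<beta>, X), y)" by (metis prod.collapse)
    have "(z1, z2) \<in> ident A ?Q" unfolding zs1 zs2
      by (rule ident_I_bd) (use z1(3) z2(3) be zs1 zs2 in \<open>auto simp: bdp_def bs_def\<close>)
    then have "(z1, z2) \<in> ?E" using ident_E z1(2) z2(2) by blast
    then show "C1 = C2" using z1(1) z2(1) eq_equiv_class_iff[OF eq z1(2) z2(2)] by simp
  qed
  have img: "f ` F = BM A // BM_rel A"
  proof
    show "f ` F \<subseteq> BM A // BM_rel A"
    proof
      fix K assume "K \<in> f ` F"
      then obtain z where z: "K = f (?E `` {z})" "z \<in> ?T" "bdp A ?Q z" unfolding F_def by blast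
      then have "K = g z" using key by simp
      then show "K \<in> BM A // BM_rel A" unfolding g_def using bs_BM[OF atl z(3)] by (simp add: quotientI)
    qed
  next
    show "BM A // BM_rel A \<subseteq> f ` F"
    proof
      fix K assume "K \<in> BM A // BM_rel A"
      then obtain b0 where b0: "K = BM_rel A `` {b0}" "b0 \<in> BM A" by (rule quotientE)
      then obtain \<alpha> U p where b: "b0 = (\<alpha>, U, {p})" "(\<alpha>, U) \<in> EXT A" "p \<in> Bpts \<alpha> \<inter> U"
        unfolding BM_def by blast
      have ext: "extendible A \<alpha>" using b(2) unfolding extendible_def by blast
      have \<alpha>A: "\<alpha> \<in> A" using b(2) by (simp add: EXT_def)
      note um = Umax_prop[OF ext]
      have opU: "open (Umax A \<alpha>)" using um by (simp add: EXT_def)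
      have pU: "p \<in> Umax A \<alpha>" using um b by blast
      have pf: "p \<in> frontier (cran \<alpha>)" using b(3) by (simp add: Bpts_def)
      have sQ: "(\<alpha>, Umax A \<alpha>) \<in> SQ A ?Q" unfolding SQ_def QA_def using \<alpha>A ext by blast
      have pr: "p \<in> rel_bd (Umax A \<alpha>) (cran \<alpha>)" using opU pU pf by (simp add: rel_bd_open)
      define z where "z = ((\<alpha>, Umax A \<alpha>), p)"
      have zT: "z \<in> ?T" using sQ pr by (simp add: z_def topspace_NQ Nset_def)
      have zb: "bdp A ?Q z" using sQ pr by (simp add: z_def bdp_def)
      have "bequiv (bs z) b0" unfolding z_def bs_def b(1) by (simp add: bequiv_refl)
      then have "(bs z, b0) \<in> BM_rel A" using bs_BM[OF atl zb] b0(2) by (simp add: BM_rel_def)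
      then have "g z = K" unfolding g_def b0(1)
        using eq_equiv_class_iff[OF eqB bs_BM[OF atl zb] b0(2)] by simp
      moreover have "?E `` {z} \<in> F" unfolding F_def using zT zb by blast
      ultimately show "K \<in> f ` F" using key[OF zT zb] by (metis image_eqI)
    qed
  qed
  have "bij_betw f F (BM A // BM_rel A)" unfolding bij_betw_def using inj img by blast
  then show ?thesis unfolding F_def frontier_iota[OF atl, symmetric] by blast
qed

end
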